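(* Let $f:\mathbb{R}^m\to\mathbb{R}$ be $L$-smooth, and let $\nabla f_\xi(\cdot)$ satisfy $\mathbb{E}_\xi[\nabla f_\xi(x)]=\nabla f(x)$ and $\mathbb{E}_\xi\|\nabla f_\xi(x)-\nabla f(x)\|^2\le\rho^2$ for all $x$. Let $t\ge1$, $x_0\in\mathbb{R}^m$ fixed, and $x_{s+1}=x_s-\gamma\nabla f_{\xi_s}(x_s)$ for $s=0,\dots,t-1$, with each $\xi_s$ drawn independently of $\xi_0,\dots,\xi_{s-1}$, and $0<\gamma\le\frac{1}{L(t-1)}$ (no restriction when $t=1$). Then $$\mathbb{E}\big[\|x_0-x_t\|^2\big]\le\gamma^2\,\mathbb{E}\Big[\Big\|\sum_{s=0}^{t-1}\nabla f(x_s)\Big\|^2\Big]+\gamma^2t\rho^2+(t-1)t(t+1)\gamma^3L\rho^2.$$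
   Context: $f$ is $L$-smooth means $\nabla f$ is $L$-Lipschitz. *)

theory Defs
  imports "HOL-Analysis.Analysis" "HOL-Probability.Probability"
begin

definition L_smooth :: "real \<Rightarrow> ('a::euclidean_space \<Rightarrow> real) \<Rightarrow> ('a \<Rightarrow> 'a) \<Rightarrow> bool" where
  "L_smooth L f g \<longleftrightarrow> (\<forall>x. GDERIV f x :> g x) \<and> (\<forall>x y. norm (g x - g y) \<le> L * norm (x - y))"

text \<open>SGD iterates: x_0 = x0, x_{s+1} = x_s - gamma * G x_s (omega s),
  where omega s is the sample xi_s and G x xi is the stochastic gradient.\<close>
fun sgd_iter :: "'a::real_vector \<Rightarrow> real \<Rightarrow> ('a \<Rightarrow> 'b \<Rightarrow> 'a) \<Rightarrow> (nat \<Rightarrow> 'b) \<Rightarrow> nat \<Rightarrow> 'a" where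
  "sgd_iter x0 \<gamma> G \<omega> 0 = x0"
| "sgd_iter x0 \<gamma> G \<omega> (Suc s) =
     sgd_iter x0 \<gamma> G \<omega> s - \<gamma> *\<^sub>R G (sgd_iter x0 \<gamma> G \<omega> s) (\<omega> s)"

end

theory Submission
  imports Defs
begin

lemma arith_aux: "(c::real)\<^sup>2 * (I + 2 * (3 * L * c * r\<^sup>2 * T) + tt * r\<^sup>2) = c\<^sup>2 * I + c\<^sup>2 * tt * r\<^sup>2 + (6 * T) * c ^ 3 * L * r\<^sup>2"
  by (simp add: algebra_simps power2_eq_square power3_eq_cube)

locale sgd_setup =
  fixes f :: "'a::euclidean_space \<Rightarrow> real" and g :: "'a \<Rightarrow> 'a"
    and D :: "'b measure" and G :: "'a \<Rightarrow> 'b \<Rightarrow> 'a"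
    and L \<rho> \<gamma> :: real and t :: nat and x0 :: 'a
  assumes smooth: "L_smooth L f g"
    and D: "prob_space D"
    and G_meas: "(\<lambda>(x, \<xi>). G x \<xi>) \<in> borel_measurable (borel \<Otimes>\<^sub>M D)"
    and G_int: "\<And>x. integrable D (G x)"
    and unbiased: "\<And>x. (\<integral>\<xi>. G x \<xi> \<partial>D) = g x"
    and var_int: "\<And>x. integrable D (\<lambda>\<xi>. (norm (G x \<xi> - g x))\<^sup>2)"
    and var_bound: "\<And>x. (\<integral>\<xi>. (norm (G x \<xi> - g x))\<^sup>2 \<partial>D) \<le> \<rho>\<^sup>2"
    and t: "t \<ge> 1"
    and \<gamma>_pos: "\<gamma> > 0"
    and \<gamma>_le: "\<gamma> * L * real (t - 1) \<le> 1"
begin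

abbreviation "\<Omega> \<equiv> PiM {..<t} (\<lambda>_. D)"
abbreviation "xs s w \<equiv> sgd_iter x0 \<gamma> G w s"
definition "e k w = G (xs k w) (w k) - g (xs k w)"

lemma g_lip: "norm (g x - g y) \<le> L * norm (x - y)"
  using smooth unfolding L_smooth_def by blast

lemma L_nonneg: "0 \<le> L"
proof -
  obtain b :: 'a where b: "b \<in> Basis" using nonempty_Basis by blast
  have "norm b > 0" using b by auto
  moreover have "0 \<le> L * norm (b - 0)" using g_lip[of b 0] norm_ge_zero order_trans by blast
  ultimately show ?thesis by (simp add: zero_le_mult_iff)
qed

lemma g_cont: "continuous_on UNIV g"
proof (rule continuous_onI)
  fix x and \<epsilon> :: real assume "\<epsilon> > 0"
  show "\<exists>d>0. \<forall>x'\<in>UNIV. dist x' x < d \<longrightarrow> dist (g x') (g x) \<le> \<epsilon>"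
  proof (intro exI[of _ "\<epsilon> / (L + 1)"] conjI ballI impI)
    show "\<epsilon> / (L + 1) > 0" using \<open>\<epsilon> > 0\<close> L_nonneg by simp
    fix x' assume "dist x' x < \<epsilon> / (L + 1)"
    then have "(L+1) * dist x' x \<le> \<epsilon>" using L_nonneg
      by (simp add: field_simps)
    moreover have "dist (g x') (g x) \<le> L * dist x' x" using g_lip by (simp add: dist_norm)
    moreover have "L * dist x' x \<le> (L+1) * dist x' x" by (simp add: distrib_right)
    ultimately show "dist (g x') (g x) \<le> \<epsilon>" by linarith
  qed
qed

lemma g_meas[measurable]: "g \<in> borel_measurable borel"
  using g_cont by (simp add: borel_measurable_continuous_onI)

lemma D_ps: "prob_space D" by (rule D)

sublocale P: product_prob_space "\<lambda>_::nat. D" "{..<t}"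
  by (simp add: D product_prob_space_axioms_def product_prob_space_def product_sigma_finite_def prob_space_imp_sigma_finite)

lemma Omega_ps: "prob_space (PiM I (\<lambda>_::nat. D))"
  by (rule prob_space_PiM) (rule D)

lemma X_dep: "s \<le> k \<Longrightarrow> xs s (w(k:=y)) = xs s w"
  by (induction s) auto

lemma e_dep: "r < k \<Longrightarrow> e r (w(k:=y)) = e r w"
  by (simp add: e_def X_dep)

lemma e_upd: "e k (w(k:=y)) = G (xs k w) y - g (xs k w)"
  by (simp add: e_def X_dep)

lemma X_meas: "s \<le> t \<Longrightarrow> (xs s) \<in> borel_measurable \<Omega>"
proof (induction s)
  case 0 then show ?case by simp
next
  case (Suc s)
  then have m: "xs s \<in> borel_measurable \<Omega>" by simp
  have "(\<lambda>w. (xs s w, w s)) \<in> measurable \<Omega> (borel \<Otimes>\<^sub>M D)"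
    using Suc.prems by (intro measurable_Pair m measurable_component_singleton) auto
  from measurable_compose[OF this G_meas]
  have "(\<lambda>w. G (xs s w) (w s)) \<in> borel_measurable \<Omega>" by simp
  then show ?case using m by simp
qed

lemma e_meas: "k < t \<Longrightarrow> e k \<in> borel_measurable \<Omega>"
proof -
  assume k: "k < t"
  then have m: "xs k \<in> borel_measurable \<Omega>" by (simp add: X_meas)
  have "(\<lambda>w. (xs k w, w k)) \<in> measurable \<Omega> (borel \<Otimes>\<^sub>M D)"
    using k by (intro measurable_Pair m measurable_component_singleton) auto
  from measurable_compose[OF this G_meas]
  have "(\<lambda>w. G (xs k w) (w k)) \<in> borel_measurable \<Omega>" by simp
  moreover have "(\<lambda>w. g (xs k w)) \<in> borel_measurable \<Omega>"
    using measurable_compose[OF m g_meas] .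
  ultimately show ?thesis unfolding e_def by (intro borel_measurable_diff)
qed

definition L2 :: "((nat \<Rightarrow> 'b) \<Rightarrow> 'a) \<Rightarrow> bool" where
  "L2 h \<longleftrightarrow> h \<in> borel_measurable \<Omega> \<and> integrable \<Omega> (\<lambda>w. (norm (h w))\<^sup>2)"

lemma norm_add_sq: "(norm (x + y))\<^sup>2 = (norm x)\<^sup>2 + 2 * (x \<bullet> y) + (norm (y::'a))\<^sup>2"
  using dot_norm[of x y] by simp

lemma L2_meas: "L2 h \<Longrightarrow> h \<in> borel_measurable \<Omega>" by (simp add: L2_def)
lemma L2_int: "L2 h \<Longrightarrow> integrable \<Omega> (\<lambda>w. (norm (h w))\<^sup>2)" by (simp add: L2_def)

lemma L2_inner: assumes "L2 A" "L2 B"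
  shows "integrable \<Omega> (\<lambda>w. A w \<bullet> B w)"
proof -
  have i: "integrable \<Omega> (\<lambda>w. ((norm (A w))\<^sup>2 + (norm (B w))\<^sup>2)/2)"
    using assms by (intro integrable_divide Bochner_Integration.integrable_add L2_int)
  show ?thesis
  proof (rule Bochner_Integration.integrable_bound[OF i])
  show "(\<lambda>w. A w \<bullet> B w) \<in> borel_measurable \<Omega>" using assms by (intro borel_measurable_inner L2_meas)
  show "AE w in \<Omega>. norm (A w \<bullet> B w) \<le> norm (((norm (A w))\<^sup>2 + (norm (B w))\<^sup>2)/2)"
  proof (intro AE_I2)
    fix w
    have "\<bar>A w \<bullet> B w\<bar> \<le> norm (A w) * norm (B w)" by (rule Cauchy_Schwarz_ineq2)
    also have "\<dots> \<le> ((norm (A w))\<^sup>2 + (norm (B w))\<^sup>2)/2"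
      using sum_squares_bound[of "norm (A w)" "norm (B w)"] by (simp add: power2_eq_square)
    finally show "norm (A w \<bullet> B w) \<le> norm (((norm (A w))\<^sup>2 + (norm (B w))\<^sup>2)/2)" by simp
  qed
qed
qed

lemma L2_nn: assumes "L2 A" "L2 B"
  shows "integrable \<Omega> (\<lambda>w. norm (A w) * norm (B w))"
proof -
  have i: "integrable \<Omega> (\<lambda>w. ((norm (A w))\<^sup>2 + (norm (B w))\<^sup>2)/2)"
    using assms by (intro integrable_divide Bochner_Integration.integrable_add L2_int)
  show ?thesis
  proof (rule Bochner_Integration.integrable_bound[OF i])
  show "(\<lambda>w. norm (A w) * norm (B w)) \<in> borel_measurable \<Omega>" using assms
    using assms[THEN L2_meas] by measurable
  show "AE w in \<Omega>. norm (norm (A w) * norm (B w)) \<le> norm (((norm (A w))\<^sup>2 + (norm (B w))\<^sup>2)/2)"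
  proof (intro AE_I2)
    fix w
    have "norm (A w) * norm (B w) \<le> ((norm (A w))\<^sup>2 + (norm (B w))\<^sup>2)/2"
      using sum_squares_bound[of "norm (A w)" "norm (B w)"] by (simp add: power2_eq_square)
    then show "norm (norm (A w) * norm (B w)) \<le> norm (((norm (A w))\<^sup>2 + (norm (B w))\<^sup>2)/2)" by simp
  qed
qed
qed

lemma L2_bound: assumes "L2 k" "h \<in> borel_measurable \<Omega>" "\<And>w. norm (h w) \<le> a + b * norm (k w)"
  shows "L2 h"
proof -
  have i: "integrable \<Omega> (\<lambda>w. 2 * a\<^sup>2 + 2 * b\<^sup>2 * (norm (k w))\<^sup>2)"
    using assms(1)
    by (intro Bochner_Integration.integrable_add integrable_mult_right L2_int) (auto)
  have "integrable \<Omega> (\<lambda>w. (norm (h w))\<^sup>2)"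
  proof (rule Bochner_Integration.integrable_bound[OF i])
  show "(\<lambda>w. (norm (h w))\<^sup>2) \<in> borel_measurable \<Omega>" using assms(2) by measurable
  show "AE w in \<Omega>. norm ((norm (h w))\<^sup>2) \<le> norm (2 * a\<^sup>2 + 2 * b\<^sup>2 * (norm (k w))\<^sup>2)"
  proof (intro AE_I2)
    fix w
    have h: "norm (h w) \<le> a + b * norm (k w)" by (rule assms(3))
    have "(norm (h w))\<^sup>2 \<le> (a + b * norm (k w))\<^sup>2" using h by (simp add: power_mono)
    also have "\<dots> \<le> 2 * a\<^sup>2 + 2 * b\<^sup>2 * (norm (k w))\<^sup>2"
      using sum_squares_bound[of a "b * norm (k w)"] by (simp add: power2_eq_square algebra_simps)
    finally show "norm ((norm (h w))\<^sup>2) \<le> norm (2 * a\<^sup>2 + 2 * b\<^sup>2 * (norm (k w))\<^sup>2)" by simp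
  qed
qed
  then show ?thesis using assms(2) by (simp add: L2_def)
qed

lemma L2_add: assumes "L2 A" "L2 B" shows "L2 (\<lambda>w. A w + B w)"
proof -
  have "integrable \<Omega> (\<lambda>w. (norm (A w + B w))\<^sup>2)"
  proof -
    have "(\<lambda>w. (norm (A w + B w))\<^sup>2) = (\<lambda>w. (norm (A w))\<^sup>2 + 2 * (A w \<bullet> B w) + (norm (B w))\<^sup>2)"
      by (simp add: norm_add_sq)
    moreover have "integrable \<Omega> (\<lambda>w. (norm (A w))\<^sup>2 + 2 * (A w \<bullet> B w) + (norm (B w))\<^sup>2)"
      using assms by (intro Bochner_Integration.integrable_add integrable_mult_right L2_int L2_inner)
    ultimately show ?thesis by simp
  qed
  then show ?thesis using assms unfolding L2_def by auto
qed

lemma L2_scale: assumes "L2 A" shows "L2 (\<lambda>w. c *\<^sub>R A w)"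
proof -
  have "(\<lambda>w. (norm (c *\<^sub>R A w))\<^sup>2) = (\<lambda>w. c\<^sup>2 * (norm (A w))\<^sup>2)"
    by (simp add: power_mult_distrib)
  then show ?thesis using assms unfolding L2_def by (auto intro: integrable_mult_right)
qed

lemma L2_diff: assumes "L2 A" "L2 B" shows "L2 (\<lambda>w. A w - B w)"
  using L2_add[OF assms(1) L2_scale[OF assms(2), of "-1"]] by simp

lemma L2_sum: "(\<And>i. i \<in> S \<Longrightarrow> L2 (A i)) \<Longrightarrow> L2 (\<lambda>w. \<Sum>i\<in>S. A i w)"
proof (induction S rule: infinite_finite_induct)
  case (infinite S) then show ?case
    by (simp add: L2_def)
next
  case empty then show ?case
    by (simp add: L2_def)
next
  case (insert x F) then show ?case by (simp add: L2_add)
qed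

lemma L2_g: assumes "L2 h" shows "L2 (\<lambda>w. g (h w))"
proof (rule L2_bound[OF assms, of _ "norm (g 0)" L])
  show "(\<lambda>w. g (h w)) \<in> borel_measurable \<Omega>" using measurable_compose[OF L2_meas[OF assms] g_meas] .
  fix w
  have "norm (g (h w)) \<le> norm (g 0) + norm (g (h w) - g 0)" by (rule norm_triangle_sub)
  also have "\<dots> \<le> norm (g 0) + L * norm (h w)" using g_lip[of "h w" 0] by simp
  finally show "norm (g (h w)) \<le> norm (g 0) + L * norm (h w)" .
qed

lemma int_insert:
  fixes F :: "(nat \<Rightarrow> 'b) \<Rightarrow> real"
  assumes k: "k < t" and F: "integrable \<Omega> F"
  shows "integral\<^sup>L \<Omega> F = (\<integral>w. (\<integral>y. F (w(k:=y)) \<partial>D) \<partial>PiM ({..<t}-{k}) (\<lambda>_. D))"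
proof -
  have eq: "insert k ({..<t}-{k}) = {..<t}" "insert k {..<t} = {..<t}" using k by auto
  show ?thesis using P.product_integral_insert[of "{..<t}-{k}" k F] F by (simp add: eq)
qed

lemma nn_insert:
  fixes F :: "(nat \<Rightarrow> 'b) \<Rightarrow> ennreal"
  assumes k: "k < t" and F: "F \<in> borel_measurable \<Omega>"
  shows "integral\<^sup>N \<Omega> F = (\<integral>\<^sup>+w. (\<integral>\<^sup>+y. F (w(k:=y)) \<partial>D) \<partial>PiM ({..<t}-{k}) (\<lambda>_. D))"
proof -
  have eq: "insert k ({..<t}-{k}) = {..<t}" "insert k {..<t} = {..<t}" using k by auto
  show ?thesis using P.product_nn_integral_insert[of "{..<t}-{k}" k F] F by (simp add: eq)
qed

lemma e_sq: assumes k: "k < t"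
  shows "integrable \<Omega> (\<lambda>w. (norm (e k w))\<^sup>2)" "(\<integral>w. (norm (e k w))\<^sup>2 \<partial>\<Omega>) \<le> \<rho>\<^sup>2"
proof -
  interpret Q: prob_space "PiM ({..<t}-{k}) (\<lambda>_::nat. D)" by (rule Omega_ps)
  interpret DD: prob_space D by (rule D)
  have m: "(\<lambda>w. (norm (e k w))\<^sup>2) \<in> borel_measurable \<Omega>" using e_meas[OF k] by measurable
  have inner: "(\<integral>\<^sup>+y. ennreal ((norm (e k (w(k:=y))))\<^sup>2) \<partial>D) \<le> ennreal (\<rho>\<^sup>2)" for w
  proof -
    have "(\<integral>\<^sup>+y. ennreal ((norm (e k (w(k:=y))))\<^sup>2) \<partial>D)
        = (\<integral>\<^sup>+y. ennreal ((norm (G (xs k w) y - g (xs k w)))\<^sup>2) \<partial>D)" by (simp add: e_upd)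
    also have "\<dots> = ennreal (\<integral>y. (norm (G (xs k w) y - g (xs k w)))\<^sup>2 \<partial>D)"
      by (rule nn_integral_eq_integral[OF var_int]) simp
    also have "\<dots> \<le> ennreal (\<rho>\<^sup>2)" using var_bound by (simp add: ennreal_leI)
    finally show ?thesis .
  qed
  have nn: "(\<integral>\<^sup>+w. ennreal ((norm (e k w))\<^sup>2) \<partial>\<Omega>) \<le> ennreal (\<rho>\<^sup>2)"
  proof -
    have "(\<integral>\<^sup>+w. ennreal ((norm (e k w))\<^sup>2) \<partial>\<Omega>)
        = (\<integral>\<^sup>+w. (\<integral>\<^sup>+y. ennreal ((norm (e k (w(k:=y))))\<^sup>2) \<partial>D) \<partial>PiM ({..<t}-{k}) (\<lambda>_. D))"
      by (rule nn_insert[OF k]) (use m in measurable)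
    also have "\<dots> \<le> (\<integral>\<^sup>+w. ennreal (\<rho>\<^sup>2) \<partial>PiM ({..<t}-{k}) (\<lambda>_. D))"
      by (intro nn_integral_mono inner)
    also have "\<dots> = ennreal (\<rho>\<^sup>2)" by (simp add: Q.emeasure_space_1)
    finally show ?thesis .
  qed
  show int: "integrable \<Omega> (\<lambda>w. (norm (e k w))\<^sup>2)"
    by (rule integrableI_bounded[OF m]) (use nn in \<open>auto simp: less_top[symmetric] top_unique\<close>)
  have "(\<integral>w. (norm (e k w))\<^sup>2 \<partial>\<Omega>) = enn2real (\<integral>\<^sup>+w. ennreal ((norm (e k w))\<^sup>2) \<partial>\<Omega>)"
    by (rule integral_eq_nn_integral[OF m]) simp
  also have "\<dots> \<le> \<rho>\<^sup>2" using enn2real_mono[OF nn] by simp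
  finally show "(\<integral>w. (norm (e k w))\<^sup>2 \<partial>\<Omega>) \<le> \<rho>\<^sup>2" .
qed

lemma e_L2: "k < t \<Longrightarrow> L2 (e k)"
  using e_meas e_sq(1) by (simp add: L2_def)

lemma zero_lemma:
  assumes k: "k < t" and A: "L2 A" and dep: "\<And>w y. A (w(k:=y)) = A w"
  shows "(\<integral>w. A w \<bullet> e k w \<partial>\<Omega>) = 0"
proof -
  interpret DD: prob_space D by (rule D)
  have "(\<integral>w. A w \<bullet> e k w \<partial>\<Omega>) = (\<integral>w. (\<integral>y. A (w(k:=y)) \<bullet> e k (w(k:=y)) \<partial>D) \<partial>PiM ({..<t}-{k}) (\<lambda>_. D))"
    by (rule int_insert[OF k L2_inner[OF A e_L2[OF k]]])
  also have "\<dots> = (\<integral>w. 0 \<partial>PiM ({..<t}-{k}) (\<lambda>_. D))"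
  proof (rule Bochner_Integration.integral_cong[OF refl])
    fix w
    have "(\<integral>y. A (w(k:=y)) \<bullet> e k (w(k:=y)) \<partial>D) = (\<integral>y. A w \<bullet> (G (xs k w) y - g (xs k w)) \<partial>D)"
      by (simp add: dep e_upd)
    also have "\<dots> = A w \<bullet> (\<integral>y. (G (xs k w) y - g (xs k w)) \<partial>D)"
      using G_int by (intro integral_inner_right) (auto)
    also have "(\<integral>y. (G (xs k w) y - g (xs k w)) \<partial>D) = 0"
      using G_int unbiased by (simp add: Bochner_Integration.integral_diff prob_space.prob_space[OF D])
    also have "A w \<bullet> 0 = 0" by simp
    finally show "(\<integral>y. A (w(k:=y)) \<bullet> e k (w(k:=y)) \<partial>D) = 0" .
  qed
  finally show ?thesis by simp
qed

lemma xs_Suc: "xs (Suc s) w = xs s w - \<gamma> *\<^sub>R (g (xs s w) + e s w)"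
  by (simp add: e_def)

lemma X_L2: "s \<le> t \<Longrightarrow> L2 (xs s)"
proof (induction s)
  case 0 then show ?case by (simp add: L2_def)
next
  case (Suc s)
  then have s: "s < t" by simp
  have "L2 (\<lambda>w. xs s w - \<gamma> *\<^sub>R (g (xs s w) + e s w))"
    using Suc s by (intro L2_diff L2_scale L2_add L2_g e_L2) auto
  then show ?case by (simp only: xs_Suc)
qed

definition "phi z = z - \<gamma> *\<^sub>R g z"
definition "c r m w = (phi ^^ m) (xs r w)"

lemma c_Suc: "c r (Suc m) w = c r m w - \<gamma> *\<^sub>R g (c r m w)"
  by (simp add: c_def phi_def)

lemma c_0: "c r 0 w = xs r w" by (simp add: c_def)

lemma c_dep: "r \<le> k \<Longrightarrow> c r m (w(k:=y)) = c r m w"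
  by (simp add: c_def X_dep)

lemma c_L2: "r \<le> t \<Longrightarrow> L2 (c r m)"
proof (induction m)
  case 0 then show ?case by (simp add: c_0 X_L2 del: fun_upd_apply)
next
  case (Suc m)
  then have "L2 (\<lambda>w. c r m w - \<gamma> *\<^sub>R g (c r m w))"
    by (intro L2_diff L2_scale L2_g) auto
  then show ?case by (simp only: c_Suc)
qed

lemma c_close: "norm (xs (r+m) w - c r m w) \<le> \<gamma> * (\<Sum>j<m. (1+\<gamma>*L)^(m-1-j) * norm (e (r+j) w))"
proof (induction m)
  case 0 then show ?case by (simp add: c_0)
next
  case (Suc m)
  define d where "d = xs (r+m) w - c r m w"
  define a where "a = 1 + \<gamma> * L"
  have a0: "a \<ge> 0" using L_nonneg \<gamma>_pos by (simp add: a_def)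
  have eq: "xs (r + Suc m) w - c r (Suc m) w = d - \<gamma> *\<^sub>R (g (xs (r+m) w) - g (c r m w)) - \<gamma> *\<^sub>R e (r+m) w"
    by (simp add: c_Suc d_def e_def algebra_simps)
  have "norm (xs (r + Suc m) w - c r (Suc m) w) \<le> norm d + \<gamma> * norm (g (xs (r+m) w) - g (c r m w)) + \<gamma> * norm (e (r+m) w)"
  proof -
    have "norm (d - \<gamma> *\<^sub>R (g (xs (r+m) w) - g (c r m w)) - \<gamma> *\<^sub>R e (r+m) w)
       \<le> norm (d - \<gamma> *\<^sub>R (g (xs (r+m) w) - g (c r m w))) + norm (\<gamma> *\<^sub>R e (r+m) w)"
      by (rule norm_triangle_ineq4)
    also have "\<dots> \<le> norm d + norm (\<gamma> *\<^sub>R (g (xs (r+m) w) - g (c r m w))) + norm (\<gamma> *\<^sub>R e (r+m) w)"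
      using norm_triangle_ineq4[of d "\<gamma> *\<^sub>R (g (xs (r+m) w) - g (c r m w))"] by linarith
    finally show ?thesis unfolding eq using \<gamma>_pos by simp
  qed
  also have "\<dots> \<le> norm d + \<gamma> * (L * norm d) + \<gamma> * norm (e (r+m) w)"
    using g_lip[of "xs (r+m) w" "c r m w"] \<gamma>_pos by (simp add: d_def)
  also have "\<dots> = a * norm d + \<gamma> * norm (e (r+m) w)" by (simp add: a_def algebra_simps)
  also have "\<dots> \<le> a * (\<gamma> * (\<Sum>j<m. a^(m-1-j) * norm (e (r+j) w))) + \<gamma> * norm (e (r+m) w)"
    using Suc.IH a0 by (simp add: d_def a_def mult_left_mono)
  also have "\<dots> = \<gamma> * ((\<Sum>j<m. a^(Suc m-1-j) * norm (e (r+j) w)) + norm (e (r+m) w))"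
  proof -
    have "a * (\<Sum>j<m. a^(m-1-j) * norm (e (r+j) w)) = (\<Sum>j<m. a^(Suc m-1-j) * norm (e (r+j) w))"
      unfolding sum_distrib_left
    proof (rule sum.cong[OF refl])
      fix j assume "j \<in> {..<m}"
      then have "Suc m - 1 - j = Suc (m - 1 - j)" by auto
      then show "a * (a ^ (m - 1 - j) * norm (e (r + j) w)) = a ^ (Suc m - 1 - j) * norm (e (r + j) w)"
        by simp
    qed
    then show ?thesis by (simp add: algebra_simps)
  qed
  also have "\<dots> = \<gamma> * (\<Sum>j<Suc m. (1+\<gamma>*L)^(Suc m-1-j) * norm (e (r+j) w))"
    by (simp add: a_def)
  finally show ?case .
qed

lemma pow3: "p \<le> t - 1 \<Longrightarrow> (1 + \<gamma>*L)^p \<le> 3"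
proof -
  assume p: "p \<le> t - 1"
  have gl: "0 \<le> \<gamma> * L" using L_nonneg \<gamma>_pos by simp
  have "(1 + \<gamma>*L)^p \<le> exp (\<gamma>*L)^p"
    using gl by (intro power_mono) (auto simp: exp_ge_add_one_self)
  also have "\<dots> = exp (real p * (\<gamma>*L))" by (simp add: exp_of_nat_mult)
  also have "\<dots> \<le> exp 1"
  proof -
    have "real p * (\<gamma>*L) \<le> real (t-1) * (\<gamma>*L)" using p gl by (intro mult_right_mono) auto
    also have "\<dots> \<le> 1" using \<gamma>_le by (simp add: algebra_simps)
    finally show ?thesis by simp
  qed
  also have "\<dots> \<le> 3" by (rule exp_le)
  finally show ?thesis .
qed

lemma c_close3: assumes "m \<le> t"
  shows "norm (xs (r+m) w - c r m w) \<le> 3 * \<gamma> * (\<Sum>j<m. norm (e (r+j) w))"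
proof -
  have "norm (xs (r+m) w - c r m w) \<le> \<gamma> * (\<Sum>j<m. (1+\<gamma>*L)^(m-1-j) * norm (e (r+j) w))"
    by (rule c_close)
  also have "\<dots> \<le> \<gamma> * (\<Sum>j<m. 3 * norm (e (r+j) w))"
    using \<gamma>_pos assms
    by (intro mult_left_mono sum_mono mult_right_mono pow3) auto
  also have "\<dots> = 3 * \<gamma> * (\<Sum>j<m. norm (e (r+j) w))" by (simp add: sum_distrib_left algebra_simps)
  finally show ?thesis .
qed

lemma cross_bound:
  assumes rs: "r < s" and st: "s < t"
  shows "(\<integral>w. g (xs s w) \<bullet> e r w \<partial>\<Omega>) \<le> 3 * L * \<gamma> * real (s - r) * \<rho>\<^sup>2"
proof -
  define m where "m = s - r"
  have s: "s = r + m" and mt: "m \<le> t" using rs st by (auto simp: m_def)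
  have rt: "r < t" using rs st by simp
  define K where "K = 3 * L * \<gamma> / 2"
  have K0: "K \<ge> 0" using L_nonneg \<gamma>_pos by (simp add: K_def)
  have Lc: "L2 (c r m)" using rt by (intro c_L2) auto
  have Lx: "L2 (xs s)" using st by (intro X_L2) auto
  have Le: "L2 (e r)" using rt by (rule e_L2)
  have Ler: "\<And>j. j < m \<Longrightarrow> L2 (e (r+j))" using rs st s by (intro e_L2) auto
  have split: "(\<lambda>w. g (xs s w) \<bullet> e r w) = (\<lambda>w. (g (xs s w) - g (c r m w)) \<bullet> e r w + g (c r m w) \<bullet> e r w)"
    by (simp add: inner_diff_left)
  have i1: "integrable \<Omega> (\<lambda>w. (g (xs s w) - g (c r m w)) \<bullet> e r w)"
    by (intro L2_inner L2_diff L2_g Lx Lc Le)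
  have i2: "integrable \<Omega> (\<lambda>w. g (c r m w) \<bullet> e r w)"
    by (intro L2_inner L2_g Lc Le)
  have z: "(\<integral>w. g (c r m w) \<bullet> e r w \<partial>\<Omega>) = 0"
    by (rule zero_lemma[OF rt L2_g[OF Lc]]) (simp add: c_dep)
  have iR: "integrable \<Omega> (\<lambda>w. \<Sum>j<m. K * ((norm (e (r+j) w))\<^sup>2 + (norm (e r w))\<^sup>2))"
    using Ler Le by (intro Bochner_Integration.integrable_sum integrable_mult_right Bochner_Integration.integrable_add L2_int) auto
  have pw: "(g (xs s w) - g (c r m w)) \<bullet> e r w \<le> (\<Sum>j<m. K * ((norm (e (r+j) w))\<^sup>2 + (norm (e r w))\<^sup>2))" for w
  proof -
    have "(g (xs s w) - g (c r m w)) \<bullet> e r w \<le> norm (g (xs s w) - g (c r m w)) * norm (e r w)"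
      by (rule real_inner_class.Cauchy_Schwarz_ineq2[THEN abs_le_D1])
    also have "\<dots> \<le> (L * norm (xs s w - c r m w)) * norm (e r w)"
      by (intro mult_right_mono g_lip) auto
    also have "\<dots> \<le> (L * (3 * \<gamma> * (\<Sum>j<m. norm (e (r+j) w)))) * norm (e r w)"
      using c_close3[OF mt, where r=r and w=w] L_nonneg unfolding s by (intro mult_right_mono mult_left_mono) auto
    also have "\<dots> = (\<Sum>j<m. 2 * K * (norm (e (r+j) w) * norm (e r w)))"
    proof -
      have "(L * (3 * \<gamma> * (\<Sum>j<m. norm (e (r+j) w)))) * norm (e r w) = (2*K) * (\<Sum>j<m. norm (e (r+j) w) * norm (e r w))"
        by (simp add: K_def sum_distrib_right)
      also have "\<dots> = (\<Sum>j<m. 2 * K * (norm (e (r+j) w) * norm (e r w)))" by (rule sum_distrib_left)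
      finally show ?thesis .
    qed
    also have "\<dots> \<le> (\<Sum>j<m. K * ((norm (e (r+j) w))\<^sup>2 + (norm (e r w))\<^sup>2))"
    proof (rule sum_mono)
      fix j
      have "2 * (norm (e (r+j) w) * norm (e r w)) \<le> (norm (e (r+j) w))\<^sup>2 + (norm (e r w))\<^sup>2"
        using sum_squares_bound[of "norm (e (r+j) w)" "norm (e r w)"] by (simp add: power2_eq_square)
      then show "2 * K * (norm (e (r+j) w) * norm (e r w)) \<le> K * ((norm (e (r+j) w))\<^sup>2 + (norm (e r w))\<^sup>2)"
        using mult_left_mono[OF _ K0] by (simp add: mult.assoc mult.left_commute)
    qed
    finally show ?thesis .
  qed
  have "(\<integral>w. g (xs s w) \<bullet> e r w \<partial>\<Omega>) = (\<integral>w. (g (xs s w) - g (c r m w)) \<bullet> e r w \<partial>\<Omega>) + (\<integral>w. g (c r m w) \<bullet> e r w \<partial>\<Omega>)"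
    unfolding split by (rule Bochner_Integration.integral_add[OF i1 i2])
  also have "\<dots> = (\<integral>w. (g (xs s w) - g (c r m w)) \<bullet> e r w \<partial>\<Omega>)" using z by simp
  also have "\<dots> \<le> (\<integral>w. (\<Sum>j<m. K * ((norm (e (r+j) w))\<^sup>2 + (norm (e r w))\<^sup>2)) \<partial>\<Omega>)"
    by (rule integral_mono[OF i1 iR pw])
  also have "\<dots> = (\<Sum>j<m. K * ((\<integral>w. (norm (e (r+j) w))\<^sup>2 \<partial>\<Omega>) + (\<integral>w. (norm (e r w))\<^sup>2 \<partial>\<Omega>)))"
  proof -
    have ij: "integrable \<Omega> (\<lambda>w. K * ((norm (e (r+j) w))\<^sup>2 + (norm (e r w))\<^sup>2))" if "j < m" for j
      using Ler[OF that] Le by (intro integrable_mult_right Bochner_Integration.integrable_add L2_int)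
    have "(\<integral>w. (\<Sum>j<m. K * ((norm (e (r+j) w))\<^sup>2 + (norm (e r w))\<^sup>2)) \<partial>\<Omega>)
        = (\<Sum>j<m. (\<integral>w. K * ((norm (e (r+j) w))\<^sup>2 + (norm (e r w))\<^sup>2) \<partial>\<Omega>))"
      by (rule Bochner_Integration.integral_sum) (use ij in auto)
    also have "\<dots> = (\<Sum>j<m. K * ((\<integral>w. (norm (e (r+j) w))\<^sup>2 \<partial>\<Omega>) + (\<integral>w. (norm (e r w))\<^sup>2 \<partial>\<Omega>)))"
    proof (rule sum.cong[OF refl])
      fix j assume "j \<in> {..<m}"
      then have "L2 (e (r+j))" using Ler by auto
      then show "(\<integral>w. K * ((norm (e (r+j) w))\<^sup>2 + (norm (e r w))\<^sup>2) \<partial>\<Omega>) = K * ((\<integral>w. (norm (e (r+j) w))\<^sup>2 \<partial>\<Omega>) + (\<integral>w. (norm (e r w))\<^sup>2 \<partial>\<Omega>))"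
        using Le by (simp add: Bochner_Integration.integral_add L2_int)
    qed
    finally show ?thesis .
  qed
  also have "\<dots> \<le> (\<Sum>j<m. K * (\<rho>\<^sup>2 + \<rho>\<^sup>2))"
  proof (rule sum_mono)
    fix j assume "j \<in> {..<m}"
    then have "r + j < t" using rs st s by auto
    then show "K * ((\<integral>w. (norm (e (r+j) w))\<^sup>2 \<partial>\<Omega>) + (\<integral>w. (norm (e r w))\<^sup>2 \<partial>\<Omega>)) \<le> K * (\<rho>\<^sup>2 + \<rho>\<^sup>2)"
      using e_sq(2) rt K0 by (intro mult_left_mono add_mono) auto
  qed
  also have "\<dots> = 3 * L * \<gamma> * real (s - r) * \<rho>\<^sup>2" by (simp add: K_def m_def)
  finally show ?thesis .
qed


lemma inner_tri: "2 * (\<Sum>r<s. real (s - r)) = real s * (real s + 1)"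
proof (induction s)
  case 0 then show ?case by simp
next
  case (Suc s)
  have "(\<Sum>r<Suc s. real (Suc s - r)) = (\<Sum>r<s. real (s - r)) + real s + 1"
  proof -
    have "(\<Sum>r<Suc s. real (Suc s - r)) = (\<Sum>r<s. real (Suc s - r)) + 1" by simp
    also have "(\<Sum>r<s. real (Suc s - r)) = (\<Sum>r<s. real (s - r) + 1)"
      by (intro sum.cong refl) (auto simp: Suc_diff_le of_nat_Suc)
    also have "\<dots> = (\<Sum>r<s. real (s - r)) + real s" by (simp add: sum.distrib)
    finally show ?thesis by simp
  qed
  then show ?case using Suc.IH by (simp add: algebra_simps)
qed

lemma outer_tri: "6 * (\<Sum>s<n. \<Sum>r<s. real (s - r)) = (real n - 1) * real n * (real n + 1)"
proof (induction n)
  case 0 then show ?case by simp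
next
  case (Suc n)
  have "6 * (\<Sum>s<Suc n. \<Sum>r<s. real (s - r)) = 6 * (\<Sum>s<n. \<Sum>r<s. real (s - r)) + 3 * (2 * (\<Sum>r<n. real (n - r)))"
    by (simp add: algebra_simps)
  also have "\<dots> = (real n - 1) * real n * (real n + 1) + 3 * (real n * (real n + 1))"
    using Suc.IH inner_tri by simp
  also have "\<dots> = (real (Suc n) - 1) * real (Suc n) * (real (Suc n) + 1)"
    by (simp add: algebra_simps)
  finally show ?case .
qed

lemma xs_sum: "x0 - xs n w = \<gamma> *\<^sub>R (\<Sum>s<n. g (xs s w) + e s w)"
proof (induction n)
  case 0 then show ?case by simp
next
  case (Suc n)
  have "x0 - xs (Suc n) w = (x0 - xs n w) + \<gamma> *\<^sub>R (g (xs n w) + e n w)"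
    by (simp only: xs_Suc) (simp add: algebra_simps)
  also have "\<dots> = \<gamma> *\<^sub>R (\<Sum>s<Suc n. g (xs s w) + e s w)"
    using Suc.IH by (simp add: scaleR_right_distrib)
  finally show ?case .
qed

lemma E_L2: "L2 (\<lambda>w. \<Sum>r<t. e r w)"
  by (intro L2_sum e_L2) auto

lemma S_L2: "L2 (\<lambda>w. \<Sum>s<t. g (xs s w))"
  by (intro L2_sum L2_g X_L2) auto

lemma E_sq: "(\<integral>w. (norm (\<Sum>r<t. e r w))\<^sup>2 \<partial>\<Omega>) \<le> real t * \<rho>\<^sup>2"
proof -
  have eq: "(\<lambda>w. (norm (\<Sum>r<t. e r w))\<^sup>2) = (\<lambda>w. \<Sum>r<t. \<Sum>k<t. e k w \<bullet> e r w)"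
    by (simp add: power2_norm_eq_inner inner_sum_left inner_sum_right)
  have ii: "integrable \<Omega> (\<lambda>w. e k w \<bullet> e r w)" if "r < t" "k < t" for r k
    using that by (intro L2_inner e_L2)
  have "(\<integral>w. (norm (\<Sum>r<t. e r w))\<^sup>2 \<partial>\<Omega>) = (\<Sum>r<t. \<Sum>k<t. (\<integral>w. e k w \<bullet> e r w \<partial>\<Omega>))"
    unfolding eq
    apply (subst Bochner_Integration.integral_sum)
     apply (use ii in \<open>force intro: Bochner_Integration.integrable_sum\<close>)
    apply (intro sum.cong refl)
    apply (subst Bochner_Integration.integral_sum)
     apply (use ii in auto)
    done
  also have "\<dots> \<le> (\<Sum>r<t. \<Sum>k<t. (if r = k then \<rho>\<^sup>2 else 0))"
  proof (intro sum_mono)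
    fix r k assume r: "r \<in> {..<t}" and k: "k \<in> {..<t}"
    consider "r = k" | "r < k" | "k < r" by linarith
    then show "(\<integral>w. e k w \<bullet> e r w \<partial>\<Omega>) \<le> (if r = k then \<rho>\<^sup>2 else 0)"
    proof cases
      case 1 then show ?thesis using e_sq(2)[of r] r by (simp add: power2_norm_eq_inner)
    next
      case 2
      have "(\<integral>w. e r w \<bullet> e k w \<partial>\<Omega>) = 0"
        using k r 2 by (intro zero_lemma e_L2) (auto simp: e_dep)
      then show ?thesis using 2 by (simp add: inner_commute)
    next
      case 3
      have "(\<integral>w. e k w \<bullet> e r w \<partial>\<Omega>) = 0"
        using k r 3 by (intro zero_lemma e_L2) (auto simp: e_dep)
      then show ?thesis using 3 by simp
    qed
  qed
  also have "\<dots> = real t * \<rho>\<^sup>2" by simp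
  finally show ?thesis .
qed

lemma SE_bound: "(\<integral>w. (\<Sum>s<t. g (xs s w)) \<bullet> (\<Sum>r<t. e r w) \<partial>\<Omega>)
    \<le> 3 * L * \<gamma> * \<rho>\<^sup>2 * (\<Sum>s<t. \<Sum>r<s. real (s - r))"
proof -
  have eq: "(\<lambda>w. (\<Sum>s<t. g (xs s w)) \<bullet> (\<Sum>r<t. e r w)) = (\<lambda>w. \<Sum>s<t. \<Sum>r<t. g (xs s w) \<bullet> e r w)"
    apply (simp add: inner_sum_left inner_sum_right)
    apply (rule ext, rule sum.swap)
    done
  have ii: "integrable \<Omega> (\<lambda>w. g (xs s w) \<bullet> e r w)" if "s < t" "r < t" for s r
    using that by (intro L2_inner e_L2 L2_g X_L2) auto
  have "(\<integral>w. (\<Sum>s<t. g (xs s w)) \<bullet> (\<Sum>r<t. e r w) \<partial>\<Omega>) = (\<Sum>s<t. \<Sum>r<t. (\<integral>w. g (xs s w) \<bullet> e r w \<partial>\<Omega>))"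
    unfolding eq
    apply (subst Bochner_Integration.integral_sum)
     apply (use ii in \<open>force intro: Bochner_Integration.integrable_sum\<close>)
    apply (intro sum.cong refl)
    apply (subst Bochner_Integration.integral_sum)
     apply (use ii in auto)
    done
  also have "\<dots> \<le> (\<Sum>s<t. \<Sum>r<t. (if r < s then 3 * L * \<gamma> * \<rho>\<^sup>2 * real (s - r) else 0))"
  proof (intro sum_mono)
    fix s r assume s: "s \<in> {..<t}" and r: "r \<in> {..<t}"
    show "(\<integral>w. g (xs s w) \<bullet> e r w \<partial>\<Omega>) \<le> (if r < s then 3 * L * \<gamma> * \<rho>\<^sup>2 * real (s - r) else 0)"
    proof (cases "r < s")
      case True
      then show ?thesis using cross_bound[OF True] s by (simp add: algebra_simps)
    next
      case False
      have "(\<integral>w. g (xs s w) \<bullet> e r w \<partial>\<Omega>) = 0"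
        using s r False by (intro zero_lemma L2_g X_L2) (auto simp: X_dep)
      then show ?thesis using False by simp
    qed
  qed
  also have "\<dots> = (\<Sum>s<t. \<Sum>r<s. 3 * L * \<gamma> * \<rho>\<^sup>2 * real (s - r))"
  proof (rule sum.cong[OF refl])
    fix s assume "s \<in> {..<t}"
    then have "{..<t} \<inter> {r. r < s} = {..<s}" by auto
    then show "(\<Sum>r<t. (if r < s then 3 * L * \<gamma> * \<rho>\<^sup>2 * real (s - r) else 0)) = (\<Sum>r<s. 3 * L * \<gamma> * \<rho>\<^sup>2 * real (s - r))"
      by (simp add: sum.If_cases)
  qed
  also have "\<dots> = 3 * L * \<gamma> * \<rho>\<^sup>2 * (\<Sum>s<t. \<Sum>r<s. real (s - r))"
    by (simp add: sum_distrib_left)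
  finally show ?thesis .
qed

lemma main:
  "(\<integral>w. (norm (x0 - xs t w))\<^sup>2 \<partial>\<Omega>)
         \<le> \<gamma>\<^sup>2 * (\<integral>w. (norm (\<Sum>s<t. g (xs s w)))\<^sup>2 \<partial>\<Omega>)
           + \<gamma>\<^sup>2 * real t * \<rho>\<^sup>2
           + real (t - 1) * real t * real (t + 1) * \<gamma> ^ 3 * L * \<rho>\<^sup>2"
proof -
  define S where "S w = (\<Sum>s<t. g (xs s w))" for w
  define E where "E w = (\<Sum>r<t. e r w)" for w
  define T where "T = (\<Sum>s<t. \<Sum>r<s. real (s - r))"
  have LS: "L2 S" using S_L2 by (simp add: S_def[abs_def])
  have LE: "L2 E" using E_L2 by (simp add: E_def[abs_def])
  have pw: "(norm (x0 - xs t w))\<^sup>2 = \<gamma>\<^sup>2 * ((norm (S w))\<^sup>2 + 2 * (S w \<bullet> E w) + (norm (E w))\<^sup>2)" for w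
  proof -
    have "x0 - xs t w = \<gamma> *\<^sub>R (S w + E w)" by (simp add: xs_sum S_def E_def sum.distrib)
    then have "(norm (x0 - xs t w))\<^sup>2 = \<gamma>\<^sup>2 * (norm (S w + E w))\<^sup>2" by (simp add: power_mult_distrib)
    then show ?thesis by (simp add: norm_add_sq)
  qed
  have i1: "integrable \<Omega> (\<lambda>w. (norm (S w))\<^sup>2)" by (rule L2_int[OF LS])
  have i2: "integrable \<Omega> (\<lambda>w. 2 * (S w \<bullet> E w))" by (intro integrable_mult_right L2_inner LS LE)
  have i3: "integrable \<Omega> (\<lambda>w. (norm (E w))\<^sup>2)" by (rule L2_int[OF LE])
  have "(\<integral>w. (norm (x0 - xs t w))\<^sup>2 \<partial>\<Omega>) = \<gamma>\<^sup>2 * ((\<integral>w. (norm (S w))\<^sup>2 \<partial>\<Omega>) + 2 * (\<integral>w. S w \<bullet> E w \<partial>\<Omega>) + (\<integral>w. (norm (E w))\<^sup>2 \<partial>\<Omega>))"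
    unfolding pw using i1 i2 i3
    by (simp add: Bochner_Integration.integral_add Bochner_Integration.integrable_add)
  also have "\<dots> \<le> \<gamma>\<^sup>2 * ((\<integral>w. (norm (S w))\<^sup>2 \<partial>\<Omega>) + 2 * (3 * L * \<gamma> * \<rho>\<^sup>2 * T) + real t * \<rho>\<^sup>2)"
    using SE_bound E_sq by (intro mult_left_mono add_mono) (auto simp: S_def E_def T_def)
  also have "\<dots> = \<gamma>\<^sup>2 * (\<integral>w. (norm (S w))\<^sup>2 \<partial>\<Omega>) + \<gamma>\<^sup>2 * real t * \<rho>\<^sup>2 + (6 * T) * \<gamma> ^ 3 * L * \<rho>\<^sup>2"
    by (rule arith_aux)
  also have "6 * T = real (t - 1) * real t * real (t + 1)"
    using outer_tri[of t] t by (simp add: T_def of_nat_diff)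
  finally show ?thesis by (simp add: S_def)
qed


end

theorem lemma8:
  fixes f :: "'a::euclidean_space \<Rightarrow> real" and g :: "'a \<Rightarrow> 'a"
    and D :: "'b measure" and G :: "'a \<Rightarrow> 'b \<Rightarrow> 'a"
    and L \<rho> \<gamma> :: real and t :: nat and x0 :: 'a
  assumes smooth: "L_smooth L f g"
    and D: "prob_space D"
    and G_meas: "(\<lambda>(x, \<xi>). G x \<xi>) \<in> borel_measurable (borel \<Otimes>\<^sub>M D)"
    and G_int: "\<And>x. integrable D (G x)"
    and unbiased: "\<And>x. (\<integral>\<xi>. G x \<xi> \<partial>D) = g x"
    and var_int: "\<And>x. integrable D (\<lambda>\<xi>. (norm (G x \<xi> - g x))\<^sup>2)"
    and var_bound: "\<And>x. (\<integral>\<xi>. (norm (G x \<xi> - g x))\<^sup>2 \<partial>D) \<le> \<rho>\<^sup>2"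
    and t: "t \<ge> 1"
    and \<gamma>_pos: "\<gamma> > 0"
    and \<gamma>_le: "\<gamma> * L * real (t - 1) \<le> 1"
  shows "(\<integral>\<omega>. (norm (x0 - sgd_iter x0 \<gamma> G \<omega> t))\<^sup>2 \<partial>(PiM {..<t} (\<lambda>_. D)))
         \<le> \<gamma>\<^sup>2 * (\<integral>\<omega>. (norm (\<Sum>s<t. g (sgd_iter x0 \<gamma> G \<omega> s)))\<^sup>2 \<partial>(PiM {..<t} (\<lambda>_. D)))
           + \<gamma>\<^sup>2 * real t * \<rho>\<^sup>2
           + real (t - 1) * real t * real (t + 1) * \<gamma> ^ 3 * L * \<rho>\<^sup>2"
proof -
  interpret sgd_setup f g D G L \<rho> \<gamma> t x0
    by (rule sgd_setup.intro[OF assms])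
  show ?thesis by (rule main)
qed

end
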